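(* Let $n\ge1$, $p\in(0,1/2]$, $q=1-p$, and let $X_1,\dots,X_n$ be i.i.d. with $P(X_i=1)=P(X_i=-1)=p$, $P(X_i=0)=1-2p$. For $k\in\{1,\dots,n\}$ let $V_k=q^{n-k}$ and $W_k=2\bigl((1-p)^{n-k}-(1-2p)^{n-k}\bigr)$. Let $s$ be the smallest $k\in\{1,\dots,n\}$ with $W_k/V_k<1$. Then the stopping time "stop at the first $m\ge s$ with $X_m\in\{-1,1\}$, and at $m=n$ if there is none" maximizes, over all stopping times $\tau\in\{1,\dots,n\}$ with respect to the natural filtration, the probability that either $X_\tau=1$ and $X_i\ne1$ for all $i>\tau$, or $X_\tau=-1$ and $X_i\ne-1$ for all $i>\tau$. *)

theory Defs
  imports "HOL-Probability.Probability"
begin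

text \<open>Outcomes are sequences omega :: nat => int, where omega i is the value of X_i
  for i in {1..n}; the joint law is the product pmf Pi_pmf {1..n} 0 (%_. D).\<close>

definition V :: "real \<Rightarrow> nat \<Rightarrow> nat \<Rightarrow> real" where
  "V p n k = (1 - p) ^ (n - k)"

definition W :: "real \<Rightarrow> nat \<Rightarrow> nat \<Rightarrow> real" where
  "W p n k = 2 * ((1 - p) ^ (n - k) - (1 - 2 * p) ^ (n - k))"

definition threshold :: "real \<Rightarrow> nat \<Rightarrow> nat" where
  "threshold p n = (LEAST k. 1 \<le> k \<and> k \<le> n \<and> W p n k / V p n k < 1)"

definition stopping_time :: "nat \<Rightarrow> ((nat \<Rightarrow> int) \<Rightarrow> nat) \<Rightarrow> bool" where
  "stopping_time n \<tau> \<longleftrightarrow>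
     (\<forall>\<omega>. \<tau> \<omega> \<in> {1..n}) \<and>
     (\<forall>\<omega> \<omega>' k. (\<forall>i\<in>{1..k}. \<omega> i = \<omega>' i) \<longrightarrow> \<tau> \<omega> = k \<longrightarrow> \<tau> \<omega>' = k)"

definition success :: "nat \<Rightarrow> ((nat \<Rightarrow> int) \<Rightarrow> nat) \<Rightarrow> (nat \<Rightarrow> int) \<Rightarrow> bool" where
  "success n \<tau> \<omega> \<longleftrightarrow>
     (\<omega> (\<tau> \<omega>) = 1 \<and> (\<forall>i\<in>{\<tau> \<omega><..n}. \<omega> i \<noteq> 1)) \<or>
     (\<omega> (\<tau> \<omega>) = -1 \<and> (\<forall>i\<in>{\<tau> \<omega><..n}. \<omega> i \<noteq> -1))"

definition threshold_rule :: "nat \<Rightarrow> nat \<Rightarrow> (nat \<Rightarrow> int) \<Rightarrow> nat" where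
  "threshold_rule s n \<omega> =
     (if \<exists>m. s \<le> m \<and> m \<le> n \<and> \<omega> m \<in> {-1, 1}
      then (LEAST m. s \<le> m \<and> m \<le> n \<and> \<omega> m \<in> {-1, 1}) else n)"

end

theory Submission imports Defs begin

definition mg :: "nat \<Rightarrow> (nat \<Rightarrow> int) \<Rightarrow> (nat \<Rightarrow> int) \<Rightarrow> nat \<Rightarrow> int" where
  "mg a h \<omega> = (\<lambda>i. if 1 \<le> i \<and> i < a then h i else \<omega> i)"

lemma supp:
  fixes D :: "int pmf"
  assumes "pmf D 1 = p" and "pmf D (-1) = p" and "pmf D 0 = 1 - 2 * p"
  shows "set_pmf D \<subseteq> {-1,0,1}"
proof -
  have "measure_pmf.prob D {-1,0,1} = sum (pmf D) {-1,0,1}"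
    by (rule measure_measure_pmf_finite) simp
  also have "\<dots> = 1" using assms by simp
  finally have "measure_pmf.prob D {-1,0,1} = 1" .
  hence "AE x in measure_pmf D. x \<in> {-1,0,1}"
    by (subst (asm) measure_pmf.prob_eq_1) auto
  thus ?thesis by (auto simp: AE_measure_pmf_iff)
qed

lemma mg_upd: "1 \<le> a \<Longrightarrow> mg a h (f(a:=y)) = mg (Suc a) (h(a:=y)) f"
  by (auto simp: mg_def fun_eq_iff)

lemma st_range: "stopping_time n \<tau> \<Longrightarrow> \<tau> \<omega> \<in> {1..n}"
  unfolding stopping_time_def by (drule conjunct1) (erule spec)

lemma st_adapt: "stopping_time n \<tau> \<Longrightarrow> \<forall>i\<in>{1..k}. \<omega> i = \<omega>' i \<Longrightarrow> \<tau> \<omega> = k \<Longrightarrow> \<tau> \<omega>' = k"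
  unfolding stopping_time_def by (drule conjunct2) (erule allE, erule allE, erule allE, erule impE, assumption, erule impE, assumption, assumption)

lemma mg1: "mg 1 h \<omega> = \<omega>"
  by (simp add: mg_def fun_eq_iff)

lemma peel:
  fixes D :: "int pmf"
  assumes "1 \<le> a" "a \<le> n" "set_pmf D \<subseteq> {-1,0,1}"
  shows "measure_pmf.prob (Pi_pmf {a..n} 0 (\<lambda>_. D)) {\<omega>. \<Phi> (mg a h \<omega>)} =
    (\<Sum>y\<in>{-1,0,1}. measure_pmf.prob (Pi_pmf {Suc a..n} 0 (\<lambda>_. D)) {f. \<Phi> (mg (Suc a) (h(a:=y)) f)} * pmf D y)"
proof -
  let ?Q = "Pi_pmf {Suc a..n} 0 (\<lambda>_. D)"
  have ins: "{a..n} = insert a {Suc a..n}" using assms by auto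
  have eq: "Pi_pmf {a..n} 0 (\<lambda>_. D) = bind_pmf D (\<lambda>y. map_pmf (\<lambda>f. f(a:=y)) ?Q)"
    unfolding ins by (subst Pi_pmf_insert') (auto simp: map_pmf_def)
  have "emeasure (measure_pmf (Pi_pmf {a..n} 0 (\<lambda>_. D))) {\<omega>. \<Phi> (mg a h \<omega>)}
     = (\<integral>\<^sup>+y. emeasure (measure_pmf (map_pmf (\<lambda>f. f(a:=y)) ?Q)) {\<omega>. \<Phi> (mg a h \<omega>)} \<partial>measure_pmf D)"
    unfolding eq by simp
  also have "\<dots> = (\<integral>\<^sup>+y. ennreal (measure_pmf.prob ?Q {f. \<Phi> (mg (Suc a) (h(a:=y)) f)}) \<partial>measure_pmf D)"
    using assms(1) by (simp add: measure_pmf.emeasure_eq_measure mg_upd vimage_def)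
  also have "\<dots> = (\<Sum>y\<in>{-1,0,1}. ennreal (measure_pmf.prob ?Q {f. \<Phi> (mg (Suc a) (h(a:=y)) f)}) * pmf D y)"
    using assms(3) by (intro nn_integral_measure_pmf_support) auto
  also have "\<dots> = (\<Sum>y\<in>{-1,0,1}. ennreal (measure_pmf.prob ?Q {f. \<Phi> (mg (Suc a) (h(a:=y)) f)} * pmf D y))"
    by (intro sum.cong refl, subst ennreal_mult) auto
  also have "\<dots> = ennreal (\<Sum>y\<in>{-1,0,1}. measure_pmf.prob ?Q {f. \<Phi> (mg (Suc a) (h(a:=y)) f)} * pmf D y)"
    by (rule sum_ennreal) auto
  finally have fin: "ennreal (measure_pmf.prob (Pi_pmf {a..n} 0 (\<lambda>_. D)) {\<omega>. \<Phi> (mg a h \<omega>)}) =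
     ennreal (\<Sum>y\<in>{-1,0,1}. measure_pmf.prob ?Q {f. \<Phi> (mg (Suc a) (h(a:=y)) f)} * pmf D y)"
    by (simp only: measure_pmf.emeasure_eq_measure)
  have nn: "0 \<le> (\<Sum>y\<in>{-1,0,1}. measure_pmf.prob ?Q {f. \<Phi> (mg (Suc a) (h(a:=y)) f)} * pmf D y)"
    by (intro sum_nonneg mult_nonneg_nonneg) auto
  show ?thesis by (rule iffD1[OF ennreal_inj[OF measure_nonneg nn] fin])
qed


definition tt :: "real \<Rightarrow> nat \<Rightarrow> real" where
  "tt p M = 2 * ((1 - p) ^ M - (1 - 2 * p) ^ M)"

definition cc :: "real \<Rightarrow> nat \<Rightarrow> nat \<Rightarrow> real" where
  "cc p n a = tt p (n + 1 - max a (threshold p n))"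

lemma mono_cond:
  fixes q r :: real
  assumes "0 \<le> r" "r \<le> q" "0 < q" "M' \<le> M" "q ^ M < 2 * r ^ M"
  shows "q ^ M' < 2 * r ^ M'"
proof -
  obtain d where d: "M = M' + d" using assms(4) le_Suc_ex by blast
  have rd: "r ^ d \<le> q ^ d" using assms by (intro power_mono) auto
  have "q ^ M' * q ^ d < 2 * r ^ M' * r ^ d" using assms(5) d by (simp add: power_add mult.assoc)
  also have "\<dots> \<le> 2 * r ^ M' * q ^ d" using rd assms by (intro mult_left_mono) auto
  finally show ?thesis using assms(3) by (simp add: mult_less_cancel_right)
qed

lemma tt_Suc: "tt p (Suc M) = 2 * p * (1 - p) ^ M + (1 - 2 * p) * tt p M"
  by (simp add: tt_def algebra_simps)

lemma tt_nonneg: "0 < p \<Longrightarrow> p \<le> 1/2 \<Longrightarrow> 0 \<le> tt p M"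
  unfolding tt_def by (auto intro!: power_mono)

context
  fixes n :: nat and p :: real
  assumes n1: "n \<ge> 1" and p0: "0 < p" and ph: "p \<le> 1/2"
begin

lemma V_pos: "0 < V p n k"
  using p0 ph by (simp add: V_def)

lemma WV_iff: "W p n k / V p n k < 1 \<longleftrightarrow> W p n k < V p n k"
  using V_pos[of k] by (simp add: divide_less_eq)

lemma thr_props: "1 \<le> threshold p n \<and> threshold p n \<le> n \<and> W p n (threshold p n) < V p n (threshold p n)"
proof -
  have ex: "1 \<le> n \<and> n \<le> n \<and> W p n n / V p n n < 1"
    using n1 by (simp add: W_def V_def)
  show ?thesis
    using LeastI[of "\<lambda>k. 1 \<le> k \<and> k \<le> n \<and> W p n k / V p n k < 1", OF ex]
    unfolding threshold_def WV_iff by blast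
qed

lemma thr_below: "1 \<le> k \<Longrightarrow> k < threshold p n \<Longrightarrow> V p n k \<le> W p n k"
proof -
  assume k: "1 \<le> k" "k < threshold p n"
  have "\<not> (1 \<le> k \<and> k \<le> n \<and> W p n k / V p n k < 1)"
    using k(2) unfolding threshold_def by (rule not_less_Least)
  moreover have "k \<le> n" using k thr_props by linarith
  ultimately show ?thesis using k WV_iff by auto
qed

lemma thr_above: "threshold p n \<le> k \<Longrightarrow> k \<le> n \<Longrightarrow> W p n k < V p n k"
proof -
  assume k: "threshold p n \<le> k" "k \<le> n"
  have "W p n (threshold p n) < V p n (threshold p n)" using thr_props by blast
  hence h1: "(1-p) ^ (n - threshold p n) < 2 * (1-2*p) ^ (n - threshold p n)"
    unfolding W_def V_def by (simp add: algebra_simps)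
  have "(1-p) ^ (n - k) < 2 * (1-2*p) ^ (n - k)"
    by (rule mono_cond[OF _ _ _ _ h1]) (use p0 ph k in auto)
  thus ?thesis unfolding W_def V_def by (simp add: algebra_simps)
qed

lemma cc_nonneg: "0 \<le> cc p n a"
  using p0 ph by (simp add: cc_def tt_nonneg)

lemma cc_end: "cc p n (Suc n) = 0"
  using thr_props by (simp add: cc_def tt_def)

lemma cc_above:
  assumes "threshold p n \<le> a" "a \<le> n"
  shows "cc p n (Suc a) < (1-p)^(n-a)"
    and "2 * p * (1-p)^(n-a) + (1 - 2*p) * cc p n (Suc a) = cc p n a"
proof -
  have e1: "cc p n (Suc a) = W p n a" using assms by (simp add: cc_def W_def tt_def)
  show "cc p n (Suc a) < (1-p)^(n-a)" using thr_above[OF assms] e1 by (simp add: V_def)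
  have "cc p n a = tt p (Suc (n - a))" using assms by (simp add: cc_def Suc_diff_le)
  also have "\<dots> = 2 * p * (1-p)^(n-a) + (1 - 2*p) * tt p (n - a)" by (rule tt_Suc)
  also have "tt p (n - a) = cc p n (Suc a)" using assms by (simp add: cc_def)
  finally show "2 * p * (1-p)^(n-a) + (1 - 2*p) * cc p n (Suc a) = cc p n a" by simp
qed

lemma cc_below:
  assumes "1 \<le> a" "a < threshold p n"
  shows "cc p n (Suc a) = cc p n a" and "(1-p)^(n-a) \<le> cc p n (Suc a)"
proof -
  show "cc p n (Suc a) = cc p n a" using assms by (simp add: cc_def)
  have s1: "1 \<le> threshold p n - 1" "threshold p n - 1 < threshold p n" using assms by auto
  have "V p n (threshold p n - 1) \<le> W p n (threshold p n - 1)" by (rule thr_below[OF s1])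
  hence "(1-p)^(n - (threshold p n - 1)) \<le> tt p (n - (threshold p n - 1))"
    by (simp add: V_def W_def tt_def)
  moreover have "(1-p)^(n-a) \<le> (1-p)^(n - (threshold p n - 1))"
    using assms p0 ph thr_props by (intro power_decreasing) auto
  moreover have "n - (threshold p n - 1) = n + 1 - max (Suc a) (threshold p n)"
    using assms thr_props by auto
  ultimately show "(1-p)^(n-a) \<le> cc p n (Suc a)" unfolding cc_def by simp
qed

lemma bellman:
  assumes "1 \<le> a" "a \<le> n"
  shows "2 * p * max ((1-p)^(n-a)) (cc p n (Suc a)) + (1 - 2*p) * cc p n (Suc a) \<le> cc p n a"
proof (cases "threshold p n \<le> a")
  case True
  with cc_above[OF True assms(2)] show ?thesis by (simp add: max_def)
next
  case False
  hence F: "a < threshold p n" by simp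
  with cc_below[OF assms(1) F] show ?thesis by (simp add: max_def algebra_simps)
qed

end


lemma thr_at:
  assumes "s \<le> a" "a \<le> n" "\<omega> a \<in> {-1,1}" "\<forall>m. s \<le> m \<and> m < a \<longrightarrow> \<omega> m \<notin> {-1,1}"
  shows "threshold_rule s n \<omega> = a"
proof -
  have ex: "\<exists>m. s \<le> m \<and> m \<le> n \<and> \<omega> m \<in> {-1, 1}" using assms by blast
  have "(LEAST m. s \<le> m \<and> m \<le> n \<and> \<omega> m \<in> {-1, 1}) = a"
  proof (rule Least_equality)
    show "s \<le> a \<and> a \<le> n \<and> \<omega> a \<in> {-1, 1}" using assms by blast
  next
    fix m assume "s \<le> m \<and> m \<le> n \<and> \<omega> m \<in> {-1, 1}"
    thus "a \<le> m" using assms(4) by (meson not_le)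
  qed
  thus ?thesis using ex by (simp add: threshold_rule_def)
qed

lemma thr_none:
  assumes "\<forall>m. s \<le> m \<and> m \<le> n \<longrightarrow> \<omega> m \<notin> {-1,1}"
  shows "threshold_rule s n \<omega> = n"
  using assms by (auto simp: threshold_rule_def)

lemma thr_stopping:
  assumes "1 \<le> s" "s \<le> n"
  shows "stopping_time n (threshold_rule s n)"
  unfolding stopping_time_def
proof (intro conjI allI impI)
  fix \<omega>
  show "threshold_rule s n \<omega> \<in> {1..n}"
  proof (cases "\<exists>m. s \<le> m \<and> m \<le> n \<and> \<omega> m \<in> {-1, 1}")
    case True
    have "s \<le> (LEAST m. s \<le> m \<and> m \<le> n \<and> \<omega> m \<in> {-1, 1}) \<and> (LEAST m. s \<le> m \<and> m \<le> n \<and> \<omega> m \<in> {-1, 1}) \<le> n"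
      using LeastI_ex[OF True] by blast
    thus ?thesis using True assms by (simp add: threshold_rule_def)
  next
    case False
    thus ?thesis using assms thr_none[of s n \<omega>] by auto
  qed
next
  fix \<omega> \<omega>' k
  assume agree: "\<forall>i\<in>{1..k}. \<omega> i = \<omega>' i" and tk: "threshold_rule s n \<omega> = k"
  show "threshold_rule s n \<omega>' = k"
  proof (cases "\<exists>m. s \<le> m \<and> m \<le> n \<and> \<omega> m \<in> {-1, 1}")
    case True
    define P where "P = (\<lambda>m. s \<le> m \<and> m \<le> n \<and> \<omega> m \<in> {-1, 1})"
    have kdef: "k = (LEAST m. P m)" using tk True by (simp add: threshold_rule_def P_def)
    have Pk: "P k" using LeastI_ex[of P] True kdef by (auto simp: P_def)
    have below: "\<forall>m. s \<le> m \<and> m < k \<longrightarrow> \<omega>' m \<notin> {-1,1}"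
    proof (intro allI impI)
      fix m assume m: "s \<le> m \<and> m < k"
      have "\<not> P m" using m kdef not_less_Least by blast
      moreover have "\<omega> m = \<omega>' m" using agree m assms by auto
      ultimately show "\<omega>' m \<notin> {-1,1}" using m Pk by (auto simp: P_def)
    qed
    have "\<omega>' k = \<omega> k" using agree Pk assms by (auto simp: P_def)
    thus ?thesis using thr_at[of s k n \<omega>'] Pk below by (auto simp: P_def)
  next
    case False
    have "threshold_rule s n \<omega> = n" by (rule thr_none) (use False in auto)
    hence "k = n" using tk by simp
    thus ?thesis using False agree assms thr_none[of s n \<omega>'] by fastforce
  qed
qed

lemma succ_at:
  assumes "1 \<le> a" "\<And>f. T (mg (Suc a) (h(a:=y)) f) = a"
  shows "{f. success n T (mg (Suc a) (h(a:=y)) f)} =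
    {f. (y = 1 \<and> (\<forall>i\<in>{a<..n}. f i \<noteq> 1)) \<or> (y = -1 \<and> (\<forall>i\<in>{a<..n}. f i \<noteq> -1))}"
  using assms unfolding success_def by (auto simp: mg_def)

context
  fixes n :: nat and p :: real and D :: "int pmf"
  assumes n1: "n \<ge> 1" and p0: "0 < p" and ph: "p \<le> 1/2"
    and D1: "pmf D 1 = p" and Dm: "pmf D (-1) = p" and D0: "pmf D 0 = 1 - 2 * p"
begin

lemma suppD: "set_pmf D \<subseteq> {-1,0,1}"
  by (rule supp[OF D1 Dm D0])

lemma prob_none:
  assumes "c0 \<in> {-1,1}"
  shows "measure_pmf.prob (Pi_pmf {Suc a..n} 0 (\<lambda>_. D)) {f. \<forall>i\<in>{a<..n}. f i \<noteq> c0} = (1-p)^(n-a)"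
proof -
  have "{f. \<forall>i\<in>{a<..n}. f i \<noteq> c0} = Pi {Suc a..n} (\<lambda>_. UNIV - {c0})"
    by (auto simp: Pi_def Suc_le_eq)
  hence "measure_pmf.prob (Pi_pmf {Suc a..n} 0 (\<lambda>_. D)) {f. \<forall>i\<in>{a<..n}. f i \<noteq> c0}
     = (\<Prod>x\<in>{Suc a..n}. measure_pmf.prob D (UNIV - {c0}))"
    by (simp add: measure_Pi_pmf_Pi)
  also have "measure_pmf.prob D (UNIV - {c0}) = 1 - p"
    using measure_pmf.prob_compl[of "{c0}" D] assms D1 Dm by (auto simp: measure_pmf_single)
  finally show ?thesis by simp
qed

lemma prob_at:
  fixes y :: int
  assumes "y \<in> {-1,0,1}"
  shows "measure_pmf.prob (Pi_pmf {Suc a..n} 0 (\<lambda>_. D))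
    {f. (y = 1 \<and> (\<forall>i\<in>{a<..n}. f i \<noteq> 1)) \<or> (y = -1 \<and> (\<forall>i\<in>{a<..n}. f i \<noteq> -1))}
    = (if y = 0 then 0 else (1-p)^(n-a))"
proof -
  from assms consider "y = -1" | "y = 0" | "y = 1" by auto
  then show ?thesis
  proof cases
    case 1 then show ?thesis using prob_none[of "-1" a] by simp
  next
    case 2 then show ?thesis by simp
  next
    case 3 then show ?thesis using prob_none[of 1 a] by simp
  qed
qed

lemma sum3: "(\<Sum>y\<in>{-1,0,1::int}. g y * pmf D y) = p * g (-1) + (1 - 2*p) * g 0 + p * g 1"
  by (simp add: D1 Dm D0 algebra_simps)


lemma opt_bound_aux:
  assumes st: "stopping_time n \<tau>"
  shows "\<forall>a. a + d = Suc n \<longrightarrow> 1 \<le> a \<longrightarrow> (\<forall>h. (\<forall>\<omega>. a \<le> \<tau> (mg a h \<omega>)) \<longrightarrow>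
    measure_pmf.prob (Pi_pmf {a..n} 0 (\<lambda>_. D)) {\<omega>. success n \<tau> (mg a h \<omega>)} \<le> cc p n a)"
proof (induction d)
  case 0
  show ?case
  proof (intro allI impI)
    fix a h assume a0: "a + 0 = Suc n" and "1 \<le> a" and H0: "\<forall>\<omega>. a \<le> \<tau> (mg a h \<omega>)"
    have aa: "a = Suc n" using a0 by simp
    have H: "\<forall>\<omega>. Suc n \<le> \<tau> (mg (Suc n) h \<omega>)" using H0 unfolding aa .
    have "\<tau> (mg (Suc n) h (\<lambda>_. 0)) \<le> n" using st_range[OF st] by simp
    thus "measure_pmf.prob (Pi_pmf {a..n} 0 (\<lambda>_. D)) {\<omega>. success n \<tau> (mg a h \<omega>)} \<le> cc p n a"
      using H[rule_format, of "\<lambda>_. 0"] by linarith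
  qed
next
  case (Suc d)
  show ?case
  proof (intro allI impI)
    fix m h assume md: "m + Suc d = Suc n" and m1: "1 \<le> m" and H: "\<forall>\<omega>. m \<le> \<tau> (mg m h \<omega>)"
    have mn: "m \<le> n" using md by simp
    have IH: "\<forall>h. (\<forall>\<omega>. Suc m \<le> \<tau> (mg (Suc m) h \<omega>)) \<longrightarrow>
      measure_pmf.prob (Pi_pmf {Suc m..n} 0 (\<lambda>_. D)) {\<omega>. success n \<tau> (mg (Suc m) h \<omega>)} \<le> cc p n (Suc m)"
      using Suc.IH md by simp
    define B where "B = (\<lambda>y::int. if y = 0 then cc p n (Suc m) else max ((1-p)^(n-m)) (cc p n (Suc m)))"
    have each: "measure_pmf.prob (Pi_pmf {Suc m..n} 0 (\<lambda>_. D)) {f. success n \<tau> (mg (Suc m) (h(m:=y)) f)} \<le> B y"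
      if y: "y \<in> {-1,0,1}" for y :: int
    proof (cases "\<exists>f0. \<tau> (mg (Suc m) (h(m:=y)) f0) = m")
      case True
      then obtain f0 where f0: "\<tau> (mg (Suc m) (h(m:=y)) f0) = m" by blast
      have all: "\<tau> (mg (Suc m) (h(m:=y)) f) = m" for f
      proof -
        have "\<forall>i\<in>{1..m}. mg (Suc m) (h(m:=y)) f0 i = mg (Suc m) (h(m:=y)) f i" by (simp add: mg_def)
        thus "\<tau> (mg (Suc m) (h(m:=y)) f) = m" by (rule st_adapt[OF st _ f0])
      qed
      have "measure_pmf.prob (Pi_pmf {Suc m..n} 0 (\<lambda>_. D)) {f. success n \<tau> (mg (Suc m) (h(m:=y)) f)}
          = (if y = 0 then 0 else (1-p)^(n-m))"
        unfolding succ_at[of m \<tau> h y n, OF m1 all] by (rule prob_at[OF y])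
      thus ?thesis using cc_nonneg[OF n1 p0 ph, of "Suc m"] by (auto simp: B_def)
    next
      case False
      have "\<forall>\<omega>. Suc m \<le> \<tau> (mg (Suc m) (h(m:=y)) \<omega>)"
      proof
        fix \<omega>
        have "m \<le> \<tau> (mg m h (fun_upd \<omega> m y))" using H by blast
        hence "m \<le> \<tau> (mg (Suc m) (h(m:=y)) \<omega>)" using mg_upd[OF m1] by simp
        moreover have "\<tau> (mg (Suc m) (h(m:=y)) \<omega>) \<noteq> m" using False by blast
        ultimately show "Suc m \<le> \<tau> (mg (Suc m) (h(m:=y)) \<omega>)" by simp
      qed
      hence "measure_pmf.prob (Pi_pmf {Suc m..n} 0 (\<lambda>_. D)) {f. success n \<tau> (mg (Suc m) (h(m:=y)) f)}
          \<le> cc p n (Suc m)" using IH by blast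
      thus ?thesis by (auto simp: B_def)
    qed
    have "measure_pmf.prob (Pi_pmf {m..n} 0 (\<lambda>_. D)) {\<omega>. success n \<tau> (mg m h \<omega>)}
       = (\<Sum>y\<in>{-1,0,1}. measure_pmf.prob (Pi_pmf {Suc m..n} 0 (\<lambda>_. D)) {f. success n \<tau> (mg (Suc m) (h(m:=y)) f)} * pmf D y)"
      by (rule peel[where \<Phi> = "success n \<tau>", OF m1 mn suppD])
    also have "\<dots> \<le> (\<Sum>y\<in>{-1,0,1::int}. B y * pmf D y)"
      by (intro sum_mono mult_right_mono each) auto
    also have "\<dots> = p * B (-1) + (1-2*p) * B 0 + p * B 1" by (rule sum3)
    also have "\<dots> \<le> cc p n m" using bellman[OF n1 p0 ph m1 mn] by (simp add: B_def algebra_simps)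
    finally show "measure_pmf.prob (Pi_pmf {m..n} 0 (\<lambda>_. D)) {\<omega>. success n \<tau> (mg m h \<omega>)} \<le> cc p n m" .
  qed
qed

lemma opt_bound:
  assumes st: "stopping_time n \<tau>"
  shows "measure_pmf.prob (Pi_pmf {1..n} 0 (\<lambda>_. D)) {\<omega>. success n \<tau> \<omega>} \<le> cc p n 1"
proof -
  have "\<forall>\<omega>. 1 \<le> \<tau> (mg 1 (\<lambda>_. 0) \<omega>)" using st_range[OF st] by simp
  hence "measure_pmf.prob (Pi_pmf {1..n} 0 (\<lambda>_. D)) {\<omega>. success n \<tau> (mg 1 (\<lambda>_. 0) \<omega>)} \<le> cc p n 1"
    using opt_bound_aux[OF st, of n, rule_format, of 1 "\<lambda>_. 0"] by simp
  thus ?thesis by (simp only: mg1)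
qed

lemma thr_val_aux:
  shows "\<forall>a. a + d = Suc n \<longrightarrow> 1 \<le> a \<longrightarrow> (\<forall>h. (\<forall>i. threshold p n \<le> i \<and> i < a \<longrightarrow> h i \<notin> {-1,1}) \<longrightarrow>
    measure_pmf.prob (Pi_pmf {a..n} 0 (\<lambda>_. D)) {\<omega>. success n (threshold_rule (threshold p n) n) (mg a h \<omega>)} = cc p n a)"
proof (induction d)
  case 0
  have tp: "1 \<le> threshold p n" "threshold p n \<le> n" using thr_props[OF n1 p0 ph] by auto
  show ?case
  proof (intro allI impI)
    fix a and h :: "nat \<Rightarrow> int" assume a0: "a + 0 = Suc n" and "1 \<le> a" and H0: "\<forall>i. threshold p n \<le> i \<and> i < a \<longrightarrow> h i \<notin> {-1,1}"
    have aa: "a = Suc n" using a0 by simp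
    have H: "\<forall>i. threshold p n \<le> i \<and> i < Suc n \<longrightarrow> h i \<notin> {-1,1}" using H0 unfolding aa .
    have "{\<omega>. success n (threshold_rule (threshold p n) n) (mg (Suc n) h \<omega>)} = {}"
    proof -
      { fix \<omega>
        have nz: "\<forall>m. threshold p n \<le> m \<and> m \<le> n \<longrightarrow> mg (Suc n) h \<omega> m \<notin> {-1,1}"
          using H tp by (auto simp: mg_def)
        hence "threshold_rule (threshold p n) n (mg (Suc n) h \<omega>) = n" by (rule thr_none)
        moreover have "mg (Suc n) h \<omega> n \<notin> {-1,1}" using nz tp by auto
        ultimately have "\<not> success n (threshold_rule (threshold p n) n) (mg (Suc n) h \<omega>)"
          by (auto simp: success_def) }
      thus ?thesis by auto
    qed
    thus "measure_pmf.prob (Pi_pmf {a..n} 0 (\<lambda>_. D)) {\<omega>. success n (threshold_rule (threshold p n) n) (mg a h \<omega>)} = cc p n a"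
      using cc_end[OF n1 p0 ph] aa by simp
  qed
next
  case (Suc d)
  have tp: "1 \<le> threshold p n" "threshold p n \<le> n" using thr_props[OF n1 p0 ph] by auto
  show ?case
  proof (intro allI impI)
    fix m and h :: "nat \<Rightarrow> int" assume md: "m + Suc d = Suc n" and m1: "1 \<le> m" and H: "\<forall>i. threshold p n \<le> i \<and> i < m \<longrightarrow> h i \<notin> {-1,1}"
    have mn: "m \<le> n" using md by simp
    have IH: "\<forall>h. (\<forall>i. threshold p n \<le> i \<and> i < Suc m \<longrightarrow> h i \<notin> {-1,1}) \<longrightarrow>
      measure_pmf.prob (Pi_pmf {Suc m..n} 0 (\<lambda>_. D)) {\<omega>. success n (threshold_rule (threshold p n) n) (mg (Suc m) h \<omega>)} = cc p n (Suc m)"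
      using Suc.IH md by simp
    define E where "E = (\<lambda>y::int. if threshold p n \<le> m \<and> y \<noteq> 0 then (1-p)^(n-m) else cc p n (Suc m))"
    have each: "measure_pmf.prob (Pi_pmf {Suc m..n} 0 (\<lambda>_. D))
        {f. success n (threshold_rule (threshold p n) n) (mg (Suc m) (h(m:=y)) f)} = E y"
      if y: "y \<in> {-1,0,1}" for y :: int
    proof (cases "threshold p n \<le> m \<and> y \<noteq> 0")
      case True
      have all: "threshold_rule (threshold p n) n (mg (Suc m) (h(m:=y)) f) = m" for f
        by (rule thr_at) (use True mn y H m1 tp in \<open>auto simp: mg_def\<close>)
      have "measure_pmf.prob (Pi_pmf {Suc m..n} 0 (\<lambda>_. D))
          {f. success n (threshold_rule (threshold p n) n) (mg (Suc m) (h(m:=y)) f)}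
          = (if y = 0 then 0 else (1-p)^(n-m))"
        unfolding succ_at[of m "threshold_rule (threshold p n) n" h y n, OF m1 all] by (rule prob_at[OF y])
      thus ?thesis using True by (simp add: E_def)
    next
      case False
      have "\<forall>i. threshold p n \<le> i \<and> i < Suc m \<longrightarrow> (h(m:=y)) i \<notin> {-1,1}"
        using H False y by (auto simp: less_Suc_eq)
      hence "measure_pmf.prob (Pi_pmf {Suc m..n} 0 (\<lambda>_. D))
          {f. success n (threshold_rule (threshold p n) n) (mg (Suc m) (h(m:=y)) f)} = cc p n (Suc m)"
        using IH by blast
      thus ?thesis using False by (auto simp: E_def)
    qed
    have "measure_pmf.prob (Pi_pmf {m..n} 0 (\<lambda>_. D)) {\<omega>. success n (threshold_rule (threshold p n) n) (mg m h \<omega>)}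
       = (\<Sum>y\<in>{-1,0,1}. measure_pmf.prob (Pi_pmf {Suc m..n} 0 (\<lambda>_. D))
           {f. success n (threshold_rule (threshold p n) n) (mg (Suc m) (h(m:=y)) f)} * pmf D y)"
      by (rule peel[where \<Phi> = "success n (threshold_rule (threshold p n) n)", OF m1 mn suppD])
    also have "\<dots> = (\<Sum>y\<in>{-1,0,1::int}. E y * pmf D y)"
      by (intro sum.cong refl) (simp add: each)
    also have "\<dots> = p * E (-1) + (1-2*p) * E 0 + p * E 1" by (rule sum3)
    also have "\<dots> = cc p n m"
    proof (cases "threshold p n \<le> m")
      case True
      thus ?thesis using cc_above(2)[OF n1 p0 ph True mn] by (simp add: E_def algebra_simps)
    next
      case False
      hence "m < threshold p n" by simp
      thus ?thesis using cc_below(1)[OF n1 p0 ph m1] by (simp add: E_def algebra_simps)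
    qed
    finally show "measure_pmf.prob (Pi_pmf {m..n} 0 (\<lambda>_. D)) {\<omega>. success n (threshold_rule (threshold p n) n) (mg m h \<omega>)} = cc p n m" .
  qed
qed

lemma thr_val:
  "measure_pmf.prob (Pi_pmf {1..n} 0 (\<lambda>_. D)) {\<omega>. success n (threshold_rule (threshold p n) n) \<omega>} = cc p n 1"
proof -
  have tp: "1 \<le> threshold p n" using thr_props[OF n1 p0 ph] by auto
  have "\<forall>i. threshold p n \<le> i \<and> i < 1 \<longrightarrow> (\<lambda>_. 0::int) i \<notin> {-1,1}" using tp by auto
  hence "measure_pmf.prob (Pi_pmf {1..n} 0 (\<lambda>_. D)) {\<omega>. success n (threshold_rule (threshold p n) n) (mg 1 (\<lambda>_. 0) \<omega>)} = cc p n 1"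
    using thr_val_aux[of n, rule_format, of 1 "\<lambda>_. 0"] by simp
  thus ?thesis by (simp only: mg1)
qed

end


theorem mainTheorem8:
  fixes n :: nat and p :: real and D :: "int pmf"
  assumes "n \<ge> 1" and "0 < p" and "p \<le> 1/2"
    and "pmf D 1 = p" and "pmf D (-1) = p" and "pmf D 0 = 1 - 2 * p"
  defines "P \<equiv> Pi_pmf {1..n} 0 (\<lambda>_. D)"
  shows "stopping_time n (threshold_rule (threshold p n) n) \<and>
    (\<forall>\<tau>. stopping_time n \<tau> \<longrightarrow>
      measure_pmf.prob P {\<omega>. success n \<tau> \<omega>}
        \<le> measure_pmf.prob P {\<omega>. success n (threshold_rule (threshold p n) n) \<omega>})"
proof (intro conjI allI impI)
  have tp: "1 \<le> threshold p n" "threshold p n \<le> n" using thr_props[OF assms(1-3)] by auto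
  show "stopping_time n (threshold_rule (threshold p n) n)" by (rule thr_stopping[OF tp])
  fix \<tau> assume st: "stopping_time n \<tau>"
  show "measure_pmf.prob P {\<omega>. success n \<tau> \<omega>}
        \<le> measure_pmf.prob P {\<omega>. success n (threshold_rule (threshold p n) n) \<omega>}"
    unfolding P_def using opt_bound[OF assms(1-6) st] thr_val[OF assms(1-6)] by simp
qed

end
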